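(* Let $A\in\mathbb{R}^{n\times n}$ be Hurwitz, $B\in\mathbb{R}^{n\times m}$, $C\in\mathbb{R}^{m\times n}$, $D\in\mathbb{R}^{m\times m}$ with $\|D\|<1$, and consider the system $\Sigma:\ \dot{\mathbf{x}}(t)=A\mathbf{x}(t)+B\,\Phi\circ(I-D\Phi)^{-1}(C\mathbf{x}(t))$. Then the equilibrium $x=0$ of $\Sigma$ is globally asymptotically stable if and only if it is locally asymptotically stable.
   Context: $\|D\|$ is the spectral norm. $\Phi:\mathbb{R}^m\to\mathbb{R}^m$ is the componentwise ReLU, $\Phi(q)_i=\max(q_i,0)$. For $\|D\|<1$ the map $q\mapsto q-D\Phi(q)$ is a bijection of $\mathbb{R}^m$, and $(I-D\Phi)^{-1}$ denotes its inverse; $\Sigma$ is the closed loop of $\dot{\mathbf{x}}=A\mathbf{x}+B\mathbf{w}$, $\mathbf{z}=C\mathbf{x}+D\mathbf{w}$, $\mathbf{w}=\Phi(\mathbf{z})$. Stability notions: (i) for each $\varepsilon>0$ there is $\delta>0$ with $\|\mathbf{x}(0)\|<\delta\Rightarrow\|\mathbf{x}(t)\|<\varepsilon$ for all $t\geq0$; (ii) there is $\delta>0$ with $\|\mathbf{x}(0)\|<\delta\Rightarrow\lim_{t\to\infty}\mathbf{x}(t)=0$; (iii) $\lim_{t\to\infty}\mathbf{x}(t)=0$ for every initial state $\mathbf{x}(0)$. The origin is locally asymptotically stable if (i) and (ii) hold, and globally asymptotically stable if (i) and (iii) hold. *)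

theory Defs
  imports "HOL-Analysis.Analysis"
begin

definition hurwitz :: "real^'n^'n \<Rightarrow> bool" where
  "hurwitz A \<longleftrightarrow>
     (\<forall>s::complex. det (mat s - (\<chi> i j. complex_of_real (A $ i $ j))) = 0 \<longrightarrow> Re s < 0)"

definition relu :: "real^'m \<Rightarrow> real^'m" where
  "relu q = (\<chi> i. max (q $ i) 0)"

definition spec_norm :: "real^'m^'k \<Rightarrow> real" where
  "spec_norm D = onorm (\<lambda>v. D *v v)"

definition closed_loop :: "real^'n^'n \<Rightarrow> real^'m^'n \<Rightarrow> real^'n^'m \<Rightarrow> real^'m^'m
    \<Rightarrow> real^'n \<Rightarrow> real^'n" where
  "closed_loop A B C D x =
     A *v x + B *v relu (inv (\<lambda>q. q - D *v relu q) (C *v x))"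

definition is_solution :: "('a::real_normed_vector \<Rightarrow> 'a) \<Rightarrow> (real \<Rightarrow> 'a) \<Rightarrow> bool" where
  "is_solution f x \<longleftrightarrow> (\<forall>t\<ge>0. (x has_vector_derivative f (x t)) (at t within {0..}))"

definition lyap_stable :: "('a::real_normed_vector \<Rightarrow> 'a) \<Rightarrow> bool" where
  "lyap_stable f \<longleftrightarrow> (\<forall>\<epsilon>>0. \<exists>\<delta>>0. \<forall>x. is_solution f x \<and> norm (x 0) < \<delta> \<longrightarrow>
       (\<forall>t\<ge>0. norm (x t) < \<epsilon>))"

definition locally_attractive :: "('a::real_normed_vector \<Rightarrow> 'a) \<Rightarrow> bool" where
  "locally_attractive f \<longleftrightarrow> (\<exists>\<delta>>0. \<forall>x. is_solution f x \<and> norm (x 0) < \<delta> \<longrightarrow>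
       (x \<longlongrightarrow> 0) at_top)"

definition globally_attractive :: "('a::real_normed_vector \<Rightarrow> 'a) \<Rightarrow> bool" where
  "globally_attractive f \<longleftrightarrow> (\<forall>x. is_solution f x \<longrightarrow> (x \<longlongrightarrow> 0) at_top)"

definition locally_asymp_stable :: "('a::real_normed_vector \<Rightarrow> 'a) \<Rightarrow> bool" where
  "locally_asymp_stable f \<longleftrightarrow> lyap_stable f \<and> locally_attractive f"

definition globally_asymp_stable :: "('a::real_normed_vector \<Rightarrow> 'a) \<Rightarrow> bool" where
  "globally_asymp_stable f \<longleftrightarrow> lyap_stable f \<and> globally_attractive f"

end

theory Submission
  imports Defs
begin

lemma relu_scale: "0 \<le> c \<Longrightarrow> relu (c *\<^sub>R q) = c *\<^sub>R relu q"
  unfolding relu_def by (vector max_mult_distrib_left)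

lemma relu_lip: "norm (relu p - relu q) \<le> norm (p - q)"
  unfolding relu_def
  by (rule norm_le_componentwise_cart) (simp add: max_def abs_if)

lemma Dnorm: "norm (D *v v) \<le> spec_norm D * norm v"
  unfolding spec_norm_def by (rule onorm) simp

lemma spec_nonneg: "0 \<le> spec_norm D"
  unfolding spec_norm_def by (rule onorm_pos_le) simp

lemma g_inj:
  assumes "spec_norm D < 1"
  shows "inj (\<lambda>q. q - D *v relu q)"
proof (rule injI)
  fix p q assume "p - D *v relu p = q - D *v relu q"
  hence e: "p - q = D *v (relu p - relu q)" by (simp add: matrix_vector_mult_diff_distrib algebra_simps)
  have "norm (p - q) \<le> spec_norm D * norm (relu p - relu q)" using e Dnorm by metis
  also have "\<dots> \<le> spec_norm D * norm (p - q)"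
    by (rule mult_left_mono[OF relu_lip spec_nonneg])
  finally have "(1 - spec_norm D) * norm (p - q) \<le> 0" by (simp add: algebra_simps)
  moreover have "1 - spec_norm D > 0" using assms by simp
  ultimately have "norm (p - q) \<le> 0" by (simp add: mult_le_0_iff)
  thus "p = q" by simp
qed

lemma g_surj:
  assumes "spec_norm D < 1"
  shows "surj (\<lambda>q. q - D *v relu q)"
proof -
  have "\<exists>q. q - D *v relu q = y" for y
  proof -
    have "\<exists>!q. y + D *v relu q = q"
    proof (rule banach_fix_type[OF spec_nonneg assms])
      show "\<forall>p q. dist (y + D *v relu p) (y + D *v relu q) \<le> spec_norm D * dist p q"
      proof (intro allI)
        fix p q
        have "dist (y + D *v relu p) (y + D *v relu q) = norm (D *v (relu p - relu q))"
          by (simp add: dist_norm matrix_vector_mult_diff_distrib)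
        also have "\<dots> \<le> spec_norm D * norm (relu p - relu q)" by (rule Dnorm)
        also have "\<dots> \<le> spec_norm D * dist p q"
          unfolding dist_norm by (rule mult_left_mono[OF relu_lip spec_nonneg])
        finally show "dist (y + D *v relu p) (y + D *v relu q) \<le> spec_norm D * dist p q" .
      qed
    qed
    then obtain q where "y + D *v relu q = q" by blast
    hence "q - D *v relu q = y" by (metis add_diff_cancel)
    thus ?thesis by blast
  qed
  thus ?thesis by (metis surjI)
qed

lemma inv_scale:
  assumes "spec_norm D < 1" and c: "0 < c"
  shows "inv (\<lambda>q. q - D *v relu q) (c *\<^sub>R y) = c *\<^sub>R inv (\<lambda>q. q - D *v relu q) y"
proof -
  let ?g = "\<lambda>q. q - D *v relu q"
  have b: "bij ?g" using g_inj[OF assms(1)] g_surj[OF assms(1)] by (simp add: bij_def)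
  have "?g (c *\<^sub>R inv ?g y) = c *\<^sub>R ?g (inv ?g y)"
    using c by (simp add: relu_scale scaleR_right_diff_distrib matrix_vector_mult_scaleR)
  also have "\<dots> = c *\<^sub>R y"
  proof -
    have fy: "?g (inv ?g y) = y" using b by (rule bij_inv_eq_iff[THEN iffD1, OF _ refl])
    show ?thesis by (simp only: fy)
  qed
  finally have "c *\<^sub>R inv ?g y = inv ?g (c *\<^sub>R y)"
    by (rule bij_inv_eq_iff[OF b, THEN iffD2])
  thus ?thesis by (rule sym)
qed

lemma cl_scale:
  assumes "spec_norm D < 1" and "0 < c"
  shows "closed_loop A B C D (c *\<^sub>R x) = c *\<^sub>R closed_loop A B C D x"
  unfolding closed_loop_def
  using assms
  by (simp add: matrix_vector_mult_scaleR inv_scale relu_scale scaleR_right_distrib)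

lemma sol_scale:
  assumes "spec_norm D < 1" and "0 < c" and "is_solution (closed_loop A B C D) x"
  shows "is_solution (closed_loop A B C D) (\<lambda>t. c *\<^sub>R x t)"
  unfolding is_solution_def
proof (intro allI impI)
  fix t :: real assume "0 \<le> t"
  hence "(x has_vector_derivative closed_loop A B C D (x t)) (at t within {0..})"
    using assms(3) unfolding is_solution_def by blast
  hence "((\<lambda>t. c *\<^sub>R x t) has_vector_derivative c *\<^sub>R closed_loop A B C D (x t)) (at t within {0..})"
    by (rule bounded_linear.has_vector_derivative[OF bounded_linear_scaleR_right])
  thus "((\<lambda>t. c *\<^sub>R x t) has_vector_derivative closed_loop A B C D (c *\<^sub>R x t)) (at t within {0..})"
    unfolding cl_scale[OF assms(1,2)] .
qed

theorem theorem1: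
  fixes A :: "real^'n^'n" and B :: "real^'m^'n" and C :: "real^'n^'m" and D :: "real^'m^'m"
  assumes "hurwitz A" and "spec_norm D < 1"
  shows "globally_asymp_stable (closed_loop A B C D) \<longleftrightarrow>
         locally_asymp_stable (closed_loop A B C D)"
proof
  assume "globally_asymp_stable (closed_loop A B C D)"
  thus "locally_asymp_stable (closed_loop A B C D)"
    unfolding globally_asymp_stable_def locally_asymp_stable_def globally_attractive_def
      locally_attractive_def by (metis zero_less_one)
next
  assume "locally_asymp_stable (closed_loop A B C D)"
  then obtain \<delta> where d: "\<delta> > 0" and
    att: "\<And>x. is_solution (closed_loop A B C D) x \<Longrightarrow> norm (x 0) < \<delta> \<Longrightarrow> (x \<longlongrightarrow> 0) at_top"
    and ls: "lyap_stable (closed_loop A B C D)"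
    unfolding locally_asymp_stable_def locally_attractive_def by blast
  have "(x \<longlongrightarrow> 0) at_top" if s: "is_solution (closed_loop A B C D) x" for x
  proof -
    define c where "c = \<delta> / (2 * (norm (x 0) + 1))"
    have c2: "0 < 2 * (norm (x 0) + 1)" using norm_ge_zero[of "x 0"] by (smt (verit))
    have c: "0 < c" using d c2 unfolding c_def by (rule divide_pos_pos)
    have "norm (c *\<^sub>R x 0) = c * norm (x 0)" using c by simp
    also have "\<dots> < \<delta>"
    proof -
      have "c * norm (x 0) \<le> c * (norm (x 0) + 1)" using c by simp
      also have "\<dots> = \<delta> / 2" using c2 unfolding c_def by (simp add: field_simps)
      finally show ?thesis using d by simp
    qed
    finally have "((\<lambda>t. c *\<^sub>R x t) \<longlongrightarrow> 0) at_top"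
      using att[OF sol_scale[OF assms(2) c s]] by simp
    hence "((\<lambda>t. (1/c) *\<^sub>R (c *\<^sub>R x t)) \<longlongrightarrow> (1/c) *\<^sub>R 0) at_top"
      by (intro tendsto_intros)
    thus ?thesis using c by simp
  qed
  thus "globally_asymp_stable (closed_loop A B C D)"
    unfolding globally_asymp_stable_def globally_attractive_def using ls by blast
qed

end
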